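(* Let $r>0$ and let $G$ be a hyperbolic uniform disk graph with radius $r$. Let $p\in\mathbb{H}^2$, let $\varphi\in(0,\pi/2]$, and let $m$ be a line through $p$ such that for every vertex $v$ of $G$ (disk center, assumed distinct from $p$) the line through $p$ and $v$ makes an angle of at least $\varphi$ with $m$. Then the subgraph of $G$ induced by the vertices at hyperbolic distance at most $r$ from $m$ can be covered with $\mathcal{O}\big(\log\frac{1}{\varphi}\cdot\big(1+\frac{1}{r}\big)\big)$ cliques.
   Context: $\mathbb{H}^2$ denotes the hyperbolic plane of Gaussian curvature $-1$. A hyperbolic uniform disk graph with radius $r$ is the intersection graph of a finite family of closed hyperbolic disks of radius $r$ in $\mathbb{H}^2$: vertices are the disks (identified with their centers), and two vertices are adjacent iff their centers have hyperbolic distance at most $2r$. The $\mathcal{O}$-bound has an absolute implied constant (independent of $G$, $r$, $p$, $m$) and is understood asymptotically as $\varphi\to 0$. *)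

theory Defs
  imports "HOL-Analysis.Analysis"
begin

text \<open>Hyperboloid model of the hyperbolic plane H^2 (curvature -1) in R^3
  with Minkowski bilinear form of signature (-,+,+).\<close>

definition mink :: "real^3 \<Rightarrow> real^3 \<Rightarrow> real" where
  "mink x y = - (x$1 * y$1) + x$2 * y$2 + x$3 * y$3"

definition H2 :: "(real^3) set" where
  "H2 = {x. mink x x = -1 \<and> x$1 > 0}"

definition hdist :: "real^3 \<Rightarrow> real^3 \<Rightarrow> real" where
  "hdist x y = arcosh (- mink x y)"

definition tangent_unit :: "real^3 \<Rightarrow> real^3 \<Rightarrow> bool" where
  "tangent_unit p t \<longleftrightarrow> mink p t = 0 \<and> mink t t = 1"

definition hline :: "real^3 \<Rightarrow> real^3 \<Rightarrow> (real^3) set" where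
  "hline p t = range (\<lambda>s::real. cosh s *\<^sub>R p + sinh s *\<^sub>R t)"

text \<open>Tangent vector at p of the geodesic from p towards v (not normalised).\<close>
definition dir_to :: "real^3 \<Rightarrow> real^3 \<Rightarrow> real^3" where
  "dir_to p v = v + mink p v *\<^sub>R p"

definition line_angle :: "real^3 \<Rightarrow> real^3 \<Rightarrow> real^3 \<Rightarrow> real" where
  "line_angle p v t = arccos (\<bar>mink (dir_to p v) t\<bar> / sqrt (mink (dir_to p v) (dir_to p v)))"

definition hdist_set :: "real^3 \<Rightarrow> (real^3) set \<Rightarrow> real" where
  "hdist_set v L = Inf ((\<lambda>x. hdist v x) ` L)"

text \<open>Uniform disk graph of radius r on vertex set V: adjacency iff hdist \<le> 2r.
  A clique cover of the induced subgraph on S.\<close>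
definition is_clique :: "real \<Rightarrow> (real^3) set \<Rightarrow> bool" where
  "is_clique r K \<longleftrightarrow> (\<forall>x\<in>K. \<forall>y\<in>K. x \<noteq> y \<longrightarrow> hdist x y \<le> 2 * r)"

definition clique_cover :: "real \<Rightarrow> (real^3) set \<Rightarrow> (real^3) set set \<Rightarrow> bool" where
  "clique_cover r S \<C> \<longleftrightarrow> finite \<C> \<and> \<Union>\<C> = S \<and> (\<forall>K\<in>\<C>. K \<subseteq> S \<and> is_clique r K)"

end

theory Submission
  imports Defs
begin

definition nv :: "real^3 \<Rightarrow> real^3 \<Rightarrow> real^3" where
  "nv p t = vector [-(p$2*t$3 - p$3*t$2), p$3*t$1 - p$1*t$3, p$1*t$2 - p$2*t$1]"

lemma decomp:
  assumes "mink p p = -1" "tangent_unit p t"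
  shows "v = (- mink p v) *\<^sub>R p + mink t v *\<^sub>R t + mink (nv p t) v *\<^sub>R nv p t"
proof -
  have h: "- (p$1^2)+p$2^2+p$3^2 = -1" "- (t$1^2)+t$2^2+t$3^2=1" "- (p$1*t$1)+p$2*t$2+p$3*t$3 = 0"
    using assms unfolding tangent_unit_def mink_def by (auto simp: power2_eq_square)
  show ?thesis unfolding vec_eq_iff forall_3 mink_def nv_def
    using h by (simp add: vector_3) (intro conjI; algebra)
qed

lemma mink_add_left: "mink (x + y) z = mink x z + mink y z"
  by (simp add: mink_def algebra_simps)
lemma mink_scale_left: "mink (a *\<^sub>R x) z = a * mink x z"
  by (simp add: mink_def algebra_simps)
lemma mink_add_right: "mink z (x + y) = mink z x + mink z y"
  by (simp add: mink_def algebra_simps)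
lemma mink_scale_right: "mink z (a *\<^sub>R x) = a * mink z x"
  by (simp add: mink_def algebra_simps)
lemma mink_diff_left: "mink (x - y) z = mink x z - mink y z"
  by (simp add: mink_def algebra_simps)
lemma mink_sym: "mink x y = mink y x"
  by (simp add: mink_def algebra_simps)

lemma parseval:
  assumes "mink p p = -1" "tangent_unit p t"
  shows "mink v w = - (mink p v * mink p w) + mink t v * mink t w + mink (nv p t) v * mink (nv p t) w"
proof -
  have "mink v w = mink ((- mink p v) *\<^sub>R p + mink t v *\<^sub>R t + mink (nv p t) v *\<^sub>R nv p t) w"
    using decomp[OF assms, of v] by simp
  then show ?thesis by (simp add: mink_add_left mink_diff_left mink_scale_left)
qed

lemma H2_neg:
  assumes "p \<in> H2" "v \<in> H2"
  shows "mink p v < 0"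
proof -
  have hp: "p$1^2 = 1 + p$2^2 + p$3^2" "p$1 > 0" and hv: "v$1^2 = 1 + v$2^2 + v$3^2" "v$1 > 0"
    using assms unfolding H2_def mink_def by (auto simp: power2_eq_square)
  have "(p$2* v$2+p$3* v$3)^2 \<le> (p$2^2+p$3^2)*(v$2^2+v$3^2)"
  proof -
    have "0 \<le> (p$2* v$3 - p$3* v$2)^2" by simp
    then show ?thesis by (simp add: power2_eq_square algebra_simps)
  qed
  also have "\<dots> < (p$1* v$1)^2"
    using hp hv by (simp add: power_mult_distrib) (smt (verit) mult_strict_mono zero_le_power2 mult_nonneg_nonneg)
  finally have "\<bar>p$2* v$2+p$3* v$3\<bar> < p$1* v$1"
    using hp hv by (metis power2_abs power2_less_imp_less mult_pos_pos less_imp_le)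
  then show ?thesis unfolding mink_def by linarith
qed

definition cc where "cc p t v = mink (nv p t) v"
definition dd where "dd p t v = arsinh (cc p t v)"
definition bb where "bb p t v = arsinh (mink t v / sqrt ((cc p t v)^2 + 1))"

lemma repr:
  assumes "p \<in> H2" "tangent_unit p t" "v \<in> H2"
  shows "- mink p v = cosh (dd p t v) * cosh (bb p t v)"
    "mink t v = cosh (dd p t v) * sinh (bb p t v)"
    "cc p t v = sinh (dd p t v)"
proof -
  have pp: "mink p p = -1" using assms(1) by (simp add: H2_def)
  have vv: "mink v v = -1" using assms(3) by (simp add: H2_def)
  define a where "a = - mink p v"
  define b where "b = mink t v"
  define c where "c = cc p t v"
  define \<rho> where "\<rho> = sqrt (c^2 + 1)"
  have apos: "a > 0" using H2_neg[OF assms(1,3)] by (simp add: a_def)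
  have a2: "a^2 = 1 + b^2 + c^2"
    using parseval[OF pp assms(2), of v v] vv by (simp add: a_def b_def c_def cc_def power2_eq_square)
  have rpos: "\<rho> > 0" unfolding \<rho>_def by (simp add: add_nonneg_pos)
  have cd: "cosh (dd p t v) = \<rho>" by (simp add: dd_def cosh_arsinh_real \<rho>_def c_def)
  have sb: "sinh (bb p t v) = b / \<rho>" by (simp add: bb_def b_def \<rho>_def c_def)
  have r2: "\<rho>^2 = c^2 + 1" by (simp add: \<rho>_def)
  have "(\<rho> * cosh (bb p t v))^2 = \<rho>^2 * (sinh (bb p t v)^2 + 1)"
    by (simp add: power_mult_distrib cosh_square_eq)
  also have "\<dots> = b^2 + \<rho>^2" using rpos sb by (simp add: field_simps power2_eq_square) (metis mult.assoc mult.commute)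
  also have "\<dots> = a^2" using a2 r2 by simp
  finally have "\<rho> * cosh (bb p t v) = a"
    using apos rpos by (simp add: power2_eq_iff_nonneg less_imp_le)
  then show "- mink p v = cosh (dd p t v) * cosh (bb p t v)" using cd a_def by simp
  show "mink t v = cosh (dd p t v) * sinh (bb p t v)" using cd sb rpos b_def by simp
  show "cc p t v = sinh (dd p t v)" by (simp add: dd_def)
qed

lemma pair:
  assumes "p \<in> H2" "tangent_unit p t" "v \<in> H2" "w \<in> H2"
  shows "- mink v w = cosh (dd p t v - dd p t w)
     + cosh (dd p t v) * cosh (dd p t w) * (cosh (bb p t v - bb p t w) - 1)"
proof -
  have pp: "mink p p = -1" using assms(1) by (simp add: H2_def)
  note rv = repr[OF assms(1,2,3)] and rw = repr[OF assms(1,2,4)]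
  have "- mink v w = (- mink p v) * (- mink p w) - mink t v * mink t w - cc p t v * cc p t w"
    using parseval[OF pp assms(2), of v w] by (simp add: cc_def)
  also have "\<dots> = cosh (dd p t v - dd p t w)
     + cosh (dd p t v) * cosh (dd p t w) * (cosh (bb p t v - bb p t w) - 1)"
    unfolding rv rw cosh_diff by (simp add: algebra_simps)
  finally show ?thesis .
qed

lemma cosh_ge1: "cosh (x::real) \<ge> 1"
  by (rule cosh_real_ge_1)

lemma arcosh_mono_le: "1 \<le> (x::real) \<Longrightarrow> x \<le> y \<Longrightarrow> arcosh x \<le> arcosh y"
  using arcosh_less_iff_real[of y x] by linarith

lemma arcosh_cosh_abs: "arcosh (cosh (x::real)) = \<bar>x\<bar>"
proof -
  have "cosh x = cosh \<bar>x\<bar>" by simp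
  then show ?thesis using arcosh_cosh_real[of "\<bar>x\<bar>"] by simp
qed

lemma distline:
  assumes "p \<in> H2" "tangent_unit p t" "v \<in> H2" "hdist_set v (hline p t) \<le> r"
  shows "\<bar>dd p t v\<bar> \<le> r"
proof -
  note rv = repr[OF assms(1,2,3)]
  have "\<bar>dd p t v\<bar> \<le> hdist_set v (hline p t)"
    unfolding hdist_set_def
  proof (rule cInf_greatest)
    show "(\<lambda>x. hdist v x) ` hline p t \<noteq> {}" by (simp add: hline_def)
    fix y assume "y \<in> (\<lambda>x. hdist v x) ` hline p t"
    then obtain s where ys: "y = hdist v (cosh s *\<^sub>R p + sinh s *\<^sub>R t)"
      by (auto simp: hline_def)
    have "- mink v (cosh s *\<^sub>R p + sinh s *\<^sub>R t) = cosh s * (- mink p v) - sinh s * mink t v"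
      by (simp add: mink_add_right mink_scale_right mink_sym[of v p] mink_sym[of v t])
    also have "\<dots> = cosh (dd p t v) * cosh (bb p t v - s)"
      unfolding rv cosh_diff by (simp add: algebra_simps)
    finally have e: "- mink v (cosh s *\<^sub>R p + sinh s *\<^sub>R t) = cosh (dd p t v) * cosh (bb p t v - s)" .
    have "cosh (dd p t v) \<le> cosh (dd p t v) * cosh (bb p t v - s)"
      using cosh_ge1[of "bb p t v - s"] cosh_ge1[of "dd p t v"] by (simp add: mult_le_cancel_left1)
    then have "arcosh (cosh (dd p t v)) \<le> y"
      unfolding ys hdist_def e by (rule arcosh_mono_le[OF cosh_ge1])
    then show "\<bar>dd p t v\<bar> \<le> y" by (simp add: arcosh_cosh_abs)
  qed
  then show ?thesis using assms(4) by linarith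
qed

lemma angle:
  assumes "p \<in> H2" "tangent_unit p t" "v \<in> H2" "line_angle p v t \<ge> \<phi>" "0 < \<phi>" "\<phi> \<le> pi/2"
  shows "\<bar>sinh (bb p t v)\<bar> * sin \<phi> \<le> 1"
proof -
  have pp: "mink p p = -1" using assms(1) by (simp add: H2_def)
  have vv: "mink v v = -1" using assms(3) by (simp add: H2_def)
  have pt: "mink p t = 0" using assms(2) by (simp add: tangent_unit_def)
  note rv = repr[OF assms(1,2,3)]
  define a where "a = - mink p v"
  define b where "b = mink t v"
  define c where "c = cc p t v"
  have a2: "a^2 = 1 + b^2 + c^2"
    using parseval[OF pp assms(2), of v v] vv by (simp add: a_def b_def c_def cc_def power2_eq_square)
  have d1: "mink (dir_to p v) t = b"
    unfolding dir_to_def by (simp add: mink_add_left mink_scale_left pt b_def mink_sym[of v p] mink_sym[of v t])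
  have d2: "mink (dir_to p v) (dir_to p v) = b^2 + c^2"
    unfolding dir_to_def using a2 vv pp
    by (simp add: mink_add_left mink_scale_left mink_add_right mink_scale_right mink_sym[of v p] mink_sym[of v t] a_def power2_eq_square)
  define x where "x = \<bar>b\<bar> / sqrt (b^2 + c^2)"
  have la: "line_angle p v t = arccos x" unfolding line_angle_def d1 d2 x_def ..
  have x0: "0 \<le> x" by (simp add: x_def)
  have x1: "x \<le> 1"
  proof (cases "b^2 + c^2 = 0")
    case True then show ?thesis by (simp add: x_def)
  next
    case False
    have "\<bar>b\<bar> = sqrt (b^2)" by simp
    also have "\<dots> \<le> sqrt (b^2 + c^2)" by simp
    moreover have "b^2+c^2 > 0" using False by (metis add_nonneg_nonneg zero_le_power2 order_le_less)
    ultimately show ?thesis by (simp add: x_def divide_le_eq)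
  qed
  have "cos (arccos x) \<le> cos \<phi>"
    using assms(4-6) x0 x1 la by (intro cos_monotone_0_pi_le) (auto simp: arccos_ubound)
  then have xc: "x \<le> cos \<phi>" using x0 x1 by (simp add: cos_arccos)
  have sp: "0 < sin \<phi>" using assms(5,6) by (intro sin_gt_zero) auto
  have cp: "0 \<le> cos \<phi>" using assms(5,6) by (intro cos_ge_zero) auto
  have bc: "\<bar>b\<bar> * sin \<phi> \<le> \<bar>c\<bar>"
  proof (cases "b^2 + c^2 = 0")
    case True then show ?thesis by simp
  next
    case False
    then have "b^2+c^2 > 0" by (metis add_nonneg_nonneg zero_le_power2 order_le_less)
    then have q: "sqrt (b^2 + c^2) > 0" by simp
    have "\<bar>b\<bar> \<le> cos \<phi> * sqrt (b^2 + c^2)" using xc q by (simp add: x_def divide_le_eq)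
    then have "\<bar>b\<bar>^2 \<le> (cos \<phi> * sqrt (b^2 + c^2))^2" by (rule power_mono) simp
    then have b2: "b^2 \<le> (cos \<phi>)^2 * (b^2 + c^2)"
      by (simp add: power_mult_distrib)
    have "b^2 * (sin \<phi>)^2 = b^2 - (cos \<phi>)^2 * b^2" by (simp add: sin_squared_eq algebra_simps)
    then have "b^2 * (sin \<phi>)^2 \<le> c^2 * (cos \<phi>)^2"
      using b2 by (simp add: algebra_simps)
    also have "\<dots> \<le> c^2" using cp cos_le_one[of \<phi>]
      by (simp add: mult_left_le power_le_one)
    finally have "(\<bar>b\<bar> * sin \<phi>)^2 \<le> \<bar>c\<bar>^2" by (simp add: power_mult_distrib)
    then show ?thesis by (rule power2_le_imp_le) simp
  qed
  have "\<bar>c\<bar> \<le> cosh (dd p t v)"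
    using rv(3) c_def sinh_le_cosh_real[of "dd p t v"] sinh_le_cosh_real[of "- dd p t v"] by auto
  have "\<bar>sinh (bb p t v)\<bar> * sin \<phi> * cosh (dd p t v) = \<bar>b\<bar> * sin \<phi>"
    using rv(2) b_def by (simp add: abs_mult)
  also have "\<dots> \<le> cosh (dd p t v)"
    using bc \<open>\<bar>c\<bar> \<le> cosh (dd p t v)\<close> by linarith
  finally show ?thesis
    using cosh_ge1[of "dd p t v"] by (simp add: mult_le_cancel_right1)
qed

lemma cosh1_bounds: "146/100 \<le> cosh (1::real)" "cosh (1::real) \<le> 156/100"
proof -
  have e1: "exp (1::real) \<le> 272/100" using e_less_272 by simp
  have "exp (1::real) = exp (1/8) ^ 8"
    using exp_of_nat_mult[of 8 "1/8::real"] by simp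
  moreover have "(9/8::real) ^ 8 \<le> exp (1/8) ^ 8"
    by (rule power_mono) (use exp_ge_add_one_self[of "1/8::real"] in auto)
  moreover have "(256/100::real) \<le> (9/8) ^ 8" by (simp add: power_divide)
  ultimately have e2: "256/100 \<le> exp (1::real)" by linarith
  have c: "cosh (1::real) = (exp 1 + 1 / exp 1) / 2"
    by (simp add: cosh_def exp_minus')
  have "1 / exp (1::real) \<le> 1 / (256/100)" using e2 by (intro divide_left_mono) auto
  then show "cosh (1::real) \<le> 156/100" using e1 c by simp
  have "1 / (272/100) \<le> 1 / exp (1::real)" using e1 by (intro divide_left_mono) auto
  then show "146/100 \<le> cosh (1::real)" using e2 c by simp
qed

lemma delta_ok:
  fixes r :: real
  assumes "r > 0"
  shows "cosh r + (cosh r)^2 * (cosh (min r 1) - 1) \<le> cosh (2 * r)"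
proof -
  define h where "h = cosh r"
  have c2: "cosh (2 * r) = 2 * h^2 - 1" by (simp add: cosh_double_cosh h_def)
  have h1: "1 \<le> h" by (simp add: h_def cosh_ge1)
  show ?thesis
  proof (cases "r \<le> 1")
    case True
    then have "h \<le> cosh 1" unfolding h_def using assms by (subst cosh_real_nonneg_le_iff) auto
    then have h2: "h \<le> 2" using cosh1_bounds by simp
    have "h * (h - 2) \<le> 0" using h1 h2 by (simp add: mult_nonneg_nonpos)
    then have q: "h^2 - 2*h - 1 \<le> 0" by (simp add: power2_eq_square algebra_simps)
    have "(h - 1) * (h^2 - 2*h - 1) \<le> 0" using h1 q
      by (intro mult_nonneg_nonpos) auto
    then show ?thesis using True c2 by (simp add: h_def[symmetric] algebra_simps power2_eq_square power3_eq_cube)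
  next
    case False
    then have m: "min r 1 = 1" by simp
    have "cosh 1 \<le> h" unfolding h_def using False by (subst cosh_real_nonneg_le_iff) auto
    then have hk: "146/100 \<le> h" using cosh1_bounds by simp
    have E1: "h^2 * (cosh 1 - 1) \<le> h^2 * (56/100)" using cosh1_bounds by (intro mult_left_mono) auto
    have E2: "h^2 \<ge> 146/100 * h" using hk h1 by (simp add: power2_eq_square mult_right_mono)
    have "cosh r + (cosh r)^2*(cosh (min r 1) - 1) = h + h^2*(cosh 1 - 1)" using m h_def by simp
    then show ?thesis using E1 E2 hk c2 by linarith
  qed
qed

lemma cell:
  assumes "p \<in> H2" "tangent_unit p t" "v \<in> H2" "w \<in> H2" "r > 0"
    "\<bar>dd p t v\<bar> \<le> r" "\<bar>dd p t w\<bar> \<le> r" "(0 \<le> cc p t v) = (0 \<le> cc p t w)"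
    "\<bar>bb p t v - bb p t w\<bar> \<le> min r 1"
  shows "hdist v w \<le> 2 * r"
proof -
  define d1 where "d1 = dd p t v"
  define d2 where "d2 = dd p t w"
  have sg: "(0 \<le> d1) = (0 \<le> d2)" using assms(8) repr(3)[OF assms(1,2,3)] repr(3)[OF assms(1,2,4)]
    by (simp add: d1_def d2_def)
  have dd: "\<bar>d1 - d2\<bar> \<le> r" using sg assms(6,7) by (auto simp: d1_def d2_def)
  have cabs: "cosh x \<le> cosh y" if "\<bar>x\<bar> \<le> \<bar>y\<bar>" for x y :: real
  proof -
    have "cosh \<bar>x\<bar> \<le> cosh \<bar>y\<bar>" using that by (subst cosh_real_nonneg_le_iff) auto
    then show ?thesis by simp
  qed
  have A: "cosh (d1 - d2) \<le> cosh r" using dd assms(5) by (intro cabs) auto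
  have B1: "cosh d1 \<le> cosh r" using assms(6) assms(5) by (intro cabs) (auto simp: d1_def)
  have B2: "cosh d2 \<le> cosh r" using assms(7) assms(5) by (intro cabs) (auto simp: d2_def)
  have C: "cosh (bb p t v - bb p t w) - 1 \<le> cosh (min r 1) - 1"
    using assms(9) assms(5) by (simp add: cabs)
  have C0: "0 \<le> cosh (bb p t v - bb p t w) - 1" using cosh_ge1 by simp
  have "cosh d1 * cosh d2 \<le> cosh r * cosh r"
    using B1 B2 by (intro mult_mono) (auto intro: order_trans[OF zero_le_one cosh_ge1])
  then have P: "cosh d1 * cosh d2 * (cosh (bb p t v - bb p t w) - 1) \<le> (cosh r)^2 * (cosh (min r 1) - 1)"
    using C C0 B1 B2 by (simp add: power2_eq_square) (intro mult_mono, auto intro: order_trans[OF zero_le_one cosh_ge1])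
  have P0: "0 \<le> cosh d1 * cosh d2 * (cosh (bb p t v - bb p t w) - 1)"
    using C0 by (simp add: order_trans[OF zero_le_one cosh_ge1])
  have X: "- mink v w = cosh (d1 - d2) + cosh d1 * cosh d2 * (cosh (bb p t v - bb p t w) - 1)"
    using pair[OF assms(1,2,3,4)] by (simp add: d1_def d2_def)
  have "- mink v w \<le> cosh (2 * r)" using X A P delta_ok[OF assms(5)] by linarith
  moreover have "1 \<le> - mink v w" using X P0 cosh_ge1[of "d1 - d2"] by linarith
  ultimately have "hdist v w \<le> arcosh (cosh (2 * r))"
    unfolding hdist_def by (rule arcosh_mono_le[rotated])
  then show ?thesis using assms(5) by (simp add: arcosh_cosh_abs)
qed

lemma sin_lb:
  fixes \<phi> :: real
  assumes "0 < \<phi>" "\<phi> \<le> 1"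
  shows "\<phi> / 2 \<le> sin \<phi>"
proof -
  obtain z where z: "0 < z" "z < \<phi>" "sin \<phi> - sin 0 = (\<phi> - 0) * cos z"
    using MVT2[of 0 \<phi> sin cos] assms by (auto intro: DERIV_sin)
  have "cos (pi/3) \<le> cos z"
    using z assms pi_gt3 by (intro cos_monotone_0_pi_le) auto
  then have "1/2 \<le> cos z" by (simp add: cos_60)
  then have "\<phi> * (1/2) \<le> \<phi> * cos z" using assms by (intro mult_left_mono) auto
  then show ?thesis using z by simp
qed

lemma bb_bound:
  fixes \<phi> x :: real
  assumes "0 < \<phi>" "\<phi> \<le> 1/5" "\<bar>sinh x\<bar> * sin \<phi> \<le> 1"
  shows "\<bar>x\<bar> \<le> 2 * ln (1/\<phi>)"
proof -
  have s: "\<phi>/2 \<le> sin \<phi>" using assms by (intro sin_lb) auto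
  have sp: "0 < sin \<phi>" using s assms by linarith
  have "\<bar>sinh x\<bar> \<le> 1 / sin \<phi>" using assms(3) sp by (simp add: le_divide_eq)
  also have "\<dots> \<le> 1 / (\<phi>/2)" using s assms by (intro divide_left_mono) auto
  also have "\<dots> = 2/\<phi>" by simp
  also have "2/\<phi> \<le> sinh (2 * ln (1/\<phi>))"
  proof -
    have e1: "exp (2 * ln (1/\<phi>)) = 1/\<phi>^2"
      using assms(1) by (simp add: exp_of_nat_mult[of 2, simplified] power2_eq_square)
    have e2: "exp (- (2 * ln (1/\<phi>))) = \<phi>^2"
      using e1 by (simp add: exp_minus' )
    have "sinh (2 * ln (1/\<phi>)) = (1/\<phi>^2 - \<phi>^2)/2"
      by (simp add: sinh_def e1 e2)
    moreover have "2/\<phi> \<le> (1/\<phi>^2 - \<phi>^2)/2"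
    proof -
      have "\<phi>^3 \<le> (1/5)^3" using assms by (intro power_mono) auto
      then have "\<phi>^3 \<le> 1/5" by (simp add: power_divide)
      then have "\<phi> * \<phi>^3 \<le> \<phi> * (1/5)" using assms by (intro mult_left_mono) auto
      then have "\<phi>^4 \<le> 1/5 * \<phi>" by (simp add: power_Suc[symmetric] del: power_Suc) 
      then have "4 * \<phi> + \<phi>^4 \<le> 1" using assms by linarith
      then show ?thesis using assms(1) by (simp add: field_simps power2_eq_square power4_eq_xxxx)
    qed
    ultimately show ?thesis by simp
  qed
  finally have "sinh \<bar>x\<bar> \<le> sinh (2 * ln (1/\<phi>))" by simp
  then show ?thesis by (metis sinh_real_abs sinh_real_le_iff)
qed

lemma floor_eq_close:
  fixes a b :: real
  assumes "\<lfloor>a\<rfloor> = \<lfloor>b\<rfloor>"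
  shows "\<bar>a - b\<bar> < 1"
proof -
  have "of_int \<lfloor>a\<rfloor> \<le> a" "a < of_int \<lfloor>a\<rfloor> + 1" "of_int \<lfloor>b\<rfloor> \<le> b" "b < of_int \<lfloor>b\<rfloor> + 1"
    by linarith+
  moreover have "real_of_int \<lfloor>a\<rfloor> = real_of_int \<lfloor>b\<rfloor>" using assms by simp
  ultimately show ?thesis unfolding abs_less_iff by linarith
qed

theorem corollary10:
  shows "\<exists>C \<phi>0::real. C > 0 \<and> \<phi>0 > 0 \<and>
    (\<forall>r V p t \<phi>. r > 0 \<longrightarrow> finite V \<longrightarrow> V \<subseteq> H2 \<longrightarrow> p \<in> H2 \<longrightarrow> p \<notin> V \<longrightarrow>
       tangent_unit p t \<longrightarrow> 0 < \<phi> \<longrightarrow> \<phi> \<le> pi / 2 \<longrightarrow> \<phi> \<le> \<phi>0 \<longrightarrow>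
       (\<forall>v\<in>V. line_angle p v t \<ge> \<phi>) \<longrightarrow>
       (\<exists>\<C>. clique_cover r {v\<in>V. hdist_set v (hline p t) \<le> r} \<C> \<and>
             real (card \<C>) \<le> C * ln (1 / \<phi>) * (1 + 1 / r)))"
proof (rule exI[of _ "14::real"], rule exI[of _ "1/5::real"], intro conjI allI impI)
  show "(14::real) > 0" by simp
  show "(1/5::real) > 0" by simp
  fix r :: real and V :: "(real^3) set" and p t :: "real^3" and \<phi> :: real
  assume r0: "r > 0" and fV: "finite V" and VH: "V \<subseteq> H2" and pH: "p \<in> H2" and "p \<notin> V"
    and tu: "tangent_unit p t" and ph0: "0 < \<phi>" and ph2: "\<phi> \<le> pi / 2" and ph5: "\<phi> \<le> 1/5"
    and ang: "\<forall>v\<in>V. line_angle p v t \<ge> \<phi>"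
  define S where "S = {v\<in>V. hdist_set v (hline p t) \<le> r}"
  define \<delta> where "\<delta> = min r 1"
  define lg where "lg = ln (1/\<phi>)"
  define L where "L = 2 * lg"
  define M where "M = \<lceil>L / \<delta>\<rceil>"
  define key where "key v = (0 \<le> cc p t v, \<lfloor>bb p t v / \<delta>\<rfloor>)" for v
  define \<C> where "\<C> = (\<lambda>k. {v\<in>S. key v = k}) ` (key ` S)"
  have d0: "\<delta> > 0" using r0 by (simp add: \<delta>_def)
  have l1: "1 \<le> lg"
  proof -
    have "\<phi> * exp 1 \<le> \<phi> * 3" using exp_le ph0 by (intro mult_left_mono) auto
    then have "\<phi> * exp 1 \<le> 1" using ph5 by linarith
    then have "exp 1 \<le> 1/\<phi>" using ph0 by (simp add: field_simps mult.commute)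
    then have "ln (exp 1) \<le> ln (1/\<phi>)" using ph0 by (subst ln_le_cancel_iff) auto
    then show ?thesis by (simp add: lg_def)
  qed
  have SV: "S \<subseteq> V" by (auto simp: S_def)
  have fS: "finite S" using fV SV finite_subset by blast
  have props: "\<bar>dd p t v\<bar> \<le> r \<and> \<bar>bb p t v\<bar> \<le> L" if "v \<in> S" for v
  proof -
    have vH: "v \<in> H2" and hv: "hdist_set v (hline p t) \<le> r" and av: "line_angle p v t \<ge> \<phi>"
      using that VH ang by (auto simp: S_def)
    show ?thesis
      using distline[OF pH tu vH hv] bb_bound[OF ph0 ph5 angle[OF pH tu vH av ph0 ph2]]
      by (simp add: L_def lg_def)
  qed
  have keyin: "key ` S \<subseteq> UNIV \<times> {-M..M}"
  proof
    fix k assume "k \<in> key ` S"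
    then obtain v where v: "v \<in> S" "k = key v" by auto
    have b: "\<bar>bb p t v\<bar> \<le> L" using props[OF v(1)] by simp
    have "- (L/\<delta>) \<le> bb p t v / \<delta>" "bb p t v / \<delta> \<le> L/\<delta>"
      using b d0 by (auto simp: divide_le_eq le_divide_eq)
    then have "-M \<le> \<lfloor>bb p t v / \<delta>\<rfloor>" "\<lfloor>bb p t v / \<delta>\<rfloor> \<le> M"
      unfolding M_def by (linarith, linarith)
    then show "k \<in> UNIV \<times> {-M..M}" using v by (simp add: key_def)
  qed
  have cover: "clique_cover r S \<C>"
    unfolding clique_cover_def
  proof (intro conjI ballI)
    show "finite \<C>" using fS by (simp add: \<C>_def)
    show "\<Union>\<C> = S" by (auto simp: \<C>_def)
    fix K assume "K \<in> \<C>"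
    then obtain k where K: "K = {v\<in>S. key v = k}" by (auto simp: \<C>_def)
    show "K \<subseteq> S" using K by auto
    show "is_clique r K"
      unfolding is_clique_def
    proof (intro ballI impI)
      fix x y assume xK: "x \<in> K" and yK: "y \<in> K" and "x \<noteq> y"
      have xS: "x \<in> S" and yS: "y \<in> S" and kk: "key x = key y" using xK yK K by auto
      have xH: "x \<in> H2" and yH: "y \<in> H2" using xS yS SV VH by auto
      have sg: "(0 \<le> cc p t x) = (0 \<le> cc p t y)" and fl: "\<lfloor>bb p t x / \<delta>\<rfloor> = \<lfloor>bb p t y / \<delta>\<rfloor>"
        using kk by (auto simp: key_def)
      have "\<bar>bb p t x / \<delta> - bb p t y / \<delta>\<bar> < 1" using floor_eq_close[OF fl] .
      then have "\<bar>bb p t x - bb p t y\<bar> < \<delta>" using d0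
        by (simp add: diff_divide_distrib[symmetric] abs_divide divide_less_eq)
      then show "hdist x y \<le> 2 * r"
        using cell[OF pH tu xH yH r0 _ _ sg] props[OF xS] props[OF yS] by (simp add: \<delta>_def)
    qed
  qed
  have "0 \<le> L / \<delta>" using l1 d0 by (simp add: L_def)
  then have M0: "0 \<le> M" by (simp add: M_def)
  have cm: "real_of_int M \<le> L/\<delta> + 1" unfolding M_def by (rule of_int_ceiling_le_add_one)
  have "card \<C> \<le> card (key ` S)" unfolding \<C>_def by (rule card_image_le) (use fS in simp)
  also have "\<dots> \<le> card ((UNIV::bool set) \<times> {-M..M})" using card_mono[OF _ keyin] by simp
  also have "\<dots> = 2 * nat (2 * M + 1)" by (simp add: card_cartesian_product)
  finally have c1: "card \<C> \<le> 2 * nat (2 * M + 1)" .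
  have "real (card \<C>) \<le> real (2 * nat (2 * M + 1))" using c1 by (simp only: of_nat_le_iff)
  also have "real (2 * nat (2 * M + 1)) = 2 * (2 * real_of_int M + 1)" using M0 by simp
  finally have "real (card \<C>) \<le> 2 * (2 * real_of_int M + 1)" .
  also have "\<dots> \<le> 2 * (2 * (L/\<delta> + 1) + 1)" using cm by (smt (verit))
  also have "\<dots> = 8 * lg * (1/\<delta>) + 6" by (simp add: L_def field_simps)
  also have "\<dots> \<le> 8 * lg * (1 + 1/r) + 6"
  proof -
    have "1/\<delta> \<le> 1 + 1/r" using r0 by (auto simp: \<delta>_def min_def)
    then have "8 * lg * (1/\<delta>) \<le> 8 * lg * (1 + 1/r)" using l1 by (intro mult_left_mono) auto
    then show ?thesis by linarith
  qed
  also have "\<dots> \<le> 14 * lg * (1 + 1/r)"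
  proof -
    have "1 \<le> 1 + 1/r" using r0 by simp
    then have "1 * 1 \<le> lg * (1 + 1/r)" using l1 by (intro mult_mono) auto
    then show ?thesis by simp
  qed
  finally show "\<exists>\<C>. clique_cover r {v\<in>V. hdist_set v (hline p t) \<le> r} \<C> \<and>
             real (card \<C>) \<le> 14 * ln (1 / \<phi>) * (1 + 1 / r)"
    using cover by (auto simp: S_def lg_def)
qed

end
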